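(* Under the assumption $\det[K^\pm(\omega)-\omega]\neq0$ for all $\omega>0$, the limit $\tilde R^\pm(\omega):=\lim_{\epsilon\to+0}\tilde R(\omega\pm i\epsilon)$ exists (in matrix norm) for every $\omega>0$ and $\tilde R^\pm(\omega)=[K^\pm(\omega)-\omega]^{-1}$.
   Context: Let $N\ge 1$ and $\mathcal H=\mathbb C^N\oplus L^2((0,\infty))$, where $|1\rangle,\dots,|N\rangle$ is the standard orthonormal basis of $\mathbb C^N$. Let $\omega_1\le\dots\le\omega_N$ be real, $\lambda\in\mathbb R$, $v_1,\dots,v_N\in L^2((0,\infty))$. The Hamiltonian is $H=H_0+\lambda V$ with $H_0(|c\rangle+|f\rangle)=\sum_n\omega_nc_n|n\rangle+\omega f(\omega)$ on $D(H_0)=\{|c\rangle+|f\rangle:\int_0^\infty|\omega f(\omega)|^2d\omega<\infty\}$ and $V(|c\rangle+|f\rangle)=\sum_n\langle v_n|f\rangle|n\rangle+\sum_n c_n v_n$. Form-factor assumption: for all $m,n$, $v_m^*(\omega)v_n(\omega)=\pi_{mn}(\omega)/\rho_{mn}(\omega)$ with polynomials such that $\deg\rho_{mn}\ge\deg\pi_{mn}+2$, $\rho_{mn}$ has no zeros in $[0,\infty)$, $\pi_{mn}(0)=0$; $\Gamma(\omega)$ is the matrix with entries $v_m^*(\omega)v_n(\omega)$. The reduced resolvent $\tilde R(z)$ is the $N\times N$ matrix with entries $\langle m|(H-z)^{-1}|n\rangle$ for $z$ in the resolvent set of $H$. Let $K_0=\mathrm{diag}(\omega_1,\dots,\omega_N)$;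 for $\omega>0$ let $D_{mn}(\omega)=P\!\int_0^\infty\frac{v_m^*(\omega')v_n(\omega')}{\omega'-\omega}d\omega'$ (principal value) and $K^\pm(\omega)=K_0-\lambda^2D(\omega)\mp i\pi\lambda^2\Gamma(\omega)$. *)

theory Defs
  imports "HOL-Analysis.Analysis" "HOL-Computational_Algebra.Polynomial"
begin

text \<open>Model: H = C^N (+) L^2((0,oo)). The index set {1..N} is a finite type 'n.
  Elements of L^2((0,oo)) are represented by functions real => complex
  (only values on (0,oo) matter).\<close>

definition L2pos :: "(real \<Rightarrow> complex) \<Rightarrow> bool" where
  "L2pos f \<longleftrightarrow> set_borel_measurable lborel {0<..} f \<and>
     set_integrable lborel {0<..} (\<lambda>w. (norm (f w))^2)"

definition L2inner :: "(real \<Rightarrow> complex) \<Rightarrow> (real \<Rightarrow> complex) \<Rightarrow> complex" where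
  "L2inner g f = (LINT w:{0<..}|lborel. cnj (g w) * f w)"

text \<open>(c,f) lies in D(H0) and solves (H - z)(c + f) = |n>, where
  H = H0 + lam V. Equality in L^2 means equality almost everywhere on (0,oo).\<close>
definition res_sol ::
  "('n::finite \<Rightarrow> real) \<Rightarrow> real \<Rightarrow> ('n \<Rightarrow> real \<Rightarrow> complex) \<Rightarrow> complex \<Rightarrow> 'n
     \<Rightarrow> ('n \<Rightarrow> complex) \<Rightarrow> (real \<Rightarrow> complex) \<Rightarrow> bool" where
  "res_sol om lam v z n c f \<longleftrightarrow>
     L2pos f \<and> L2pos (\<lambda>w. complex_of_real w * f w) \<and>
     (\<forall>m. complex_of_real (om m) * c m + complex_of_real lam * L2inner (v m) f - z * c m
            = (if m = n then 1 else 0)) \<and>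
     (AE w in lborel. w > 0 \<longrightarrow>
        complex_of_real w * f w + complex_of_real lam * (\<Sum>k\<in>UNIV. c k * v k w) - z * f w = 0)"

text \<open>Reduced resolvent: entry (m,n) is <m|(H - z)^{-1}|n>, i.e. the m-th C^N-component
  of the (unique, for z in the resolvent set) solution psi of (H - z) psi = |n>.\<close>
definition red_resolvent ::
  "('n::finite \<Rightarrow> real) \<Rightarrow> real \<Rightarrow> ('n \<Rightarrow> real \<Rightarrow> complex) \<Rightarrow> complex \<Rightarrow> complex^'n^'n" where
  "red_resolvent om lam v z =
     (\<chi> m n. THE x. \<exists>c f. res_sol om lam v z n c f \<and> x = c m)"

definition pv_integral :: "(real \<Rightarrow> complex) \<Rightarrow> real \<Rightarrow> complex" where
  "pv_integral g w =
     Lim (at_right 0) (\<lambda>d. integral ({0<..<w - d} \<union> {w + d<..}) (\<lambda>x. g x / complex_of_real (x - w)))"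

definition Gamma_mat :: "('n::finite \<Rightarrow> real \<Rightarrow> complex) \<Rightarrow> real \<Rightarrow> complex^'n^'n" where
  "Gamma_mat v w = (\<chi> m n. cnj (v m w) * v n w)"

definition D_mat :: "('n::finite \<Rightarrow> real \<Rightarrow> complex) \<Rightarrow> real \<Rightarrow> complex^'n^'n" where
  "D_mat v w = (\<chi> m n. pv_integral (\<lambda>x. cnj (v m x) * v n x) w)"

definition K0_mat :: "('n::finite \<Rightarrow> real) \<Rightarrow> complex^'n^'n" where
  "K0_mat om = (\<chi> m n. if m = n then complex_of_real (om m) else 0)"

text \<open>K^sigma(w) for sigma = 1 (K^+) and sigma = -1 (K^-):
  K0 - lam^2 D(w) - sigma i pi lam^2 Gamma(w).\<close>
definition K_mat :: "real \<Rightarrow> ('n::finite \<Rightarrow> real) \<Rightarrow> real \<Rightarrow> ('n \<Rightarrow> real \<Rightarrow> complex) \<Rightarrow> real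
     \<Rightarrow> complex^'n^'n" where
  "K_mat \<sigma> om lam v w = (\<chi> m n. K0_mat om $ m $ n
     - complex_of_real (lam^2) * D_mat v w $ m $ n
     - complex_of_real \<sigma> * \<i> * complex_of_real (pi * lam^2) * Gamma_mat v w $ m $ n)"

end

theory Submission
  imports Defs "HOL-Probability.Sinc_Integral"
begin

lemma compact_bound_cont:
  fixes f :: "real \<Rightarrow> complex"
  assumes "continuous_on {a..b} f"
  shows "\<exists>B. \<forall>x\<in>{a..b}. norm (f x) \<le> B"
proof -
  have "compact (f ` {a..b})" by (rule compact_continuous_image[OF assms]) simp
  then obtain B where "\<forall>y\<in>f ` {a..b}. norm y \<le> B"
    using compact_imp_bounded bounded_pos by metis
  then show ?thesis by auto
qed

lemma poly_ratio_bounded: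
  fixes s r :: "complex poly"
  assumes deg: "degree s \<le> degree r" and nz: "\<And>x::real. x \<ge> 0 \<Longrightarrow> poly r (of_real x) \<noteq> 0"
  shows "\<exists>B. \<forall>x::real. x \<ge> 0 \<longrightarrow> norm (poly s (of_real x) / poly r (of_real x)) \<le> B"
proof -
  have r0: "r \<noteq> 0" using nz[of 0] by auto
  have "continuous_on {0..1} (\<lambda>x::real. poly s (of_real x) / poly r (of_real x))"
    using nz by (intro continuous_intros) auto
  then obtain B1 where B1: "\<forall>x\<in>{0..1}. norm (poly s (of_real x) / poly r (of_real x)) \<le> B1"
    using compact_bound_cont by blast
  define F where "F = (\<lambda>t::real. of_real t ^ (degree r - degree s) * poly (reflect_poly s) (of_real t) / poly (reflect_poly r) (of_real t))"
  have rnz: "poly (reflect_poly r) (of_real t) \<noteq> 0" if "t \<in> {0..1}" for t::real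
  proof (cases "t = 0")
    case True
    then show ?thesis using r0 by (simp add: poly_0_coeff_0 coeff_0_reflect_poly)
  next
    case False
    then have "poly (reflect_poly r) (of_real t) = of_real t ^ degree r * poly r (of_real (inverse t))"
      by (simp add: poly_reflect_poly_nz)
    moreover have "poly r (of_real (inverse t)) \<noteq> 0" using that by (intro nz) auto
    ultimately show ?thesis using False by simp
  qed
  have "continuous_on {0..1} F"
    unfolding F_def using rnz by (intro continuous_intros) auto
  then obtain B2 where B2: "\<forall>x\<in>{0..1}. norm (F x) \<le> B2"
    using compact_bound_cont by blast
  have "norm (poly s (of_real x) / poly r (of_real x)) \<le> max B1 B2" if "x \<ge> 0" for x::real
  proof (cases "x \<le> 1")
    case True then show ?thesis using B1 that by force
  next
    case False
    define t where "t = inverse x"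
    have t: "t \<in> {0..1}" "t \<noteq> 0" using False by (auto simp: t_def field_simps)
    have xt: "of_real (inverse t) = (of_real x :: complex)" by (simp add: t_def)
    have "F t = of_real t ^ (degree r - degree s) * (of_real t ^ degree s * poly s (of_real x))
           / (of_real t ^ degree r * poly r (of_real x))"
      unfolding F_def using t by (simp add: poly_reflect_poly_nz xt[symmetric])
    also have "\<dots> = poly s (of_real x) / poly r (of_real x)"
    proof -
      have "(of_real t :: complex) ^ (degree r - degree s) * of_real t ^ degree s = of_real t ^ degree r"
        using deg by (simp add: power_add[symmetric])
      then show ?thesis using t by (simp add: field_simps)
    qed
    finally show ?thesis using B2 t by force
  qed
  then show ?thesis by blast
qed

lemma dct_at_right:
  fixes s :: "real \<Rightarrow> 'a \<Rightarrow> 'b::{banach, second_countable_topology}" and W :: "'a \<Rightarrow> real"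
  assumes f: "f \<in> borel_measurable M" and sm: "\<And>t. t > 0 \<Longrightarrow> s t \<in> borel_measurable M"
    and W: "integrable M W"
    and lim: "AE x in M. ((\<lambda>t. s t x) \<longlongrightarrow> f x) (at_right 0)"
    and bound: "\<And>t. t > 0 \<Longrightarrow> AE x in M. norm (s t x) \<le> W x"
  shows "((\<lambda>t. integral\<^sup>L M (s t)) \<longlongrightarrow> integral\<^sup>L M f) (at_right 0)"
proof (rule tendsto_at_right_sequentially[where b=1])
  fix S :: "nat \<Rightarrow> real"
  assume S: "\<And>n. 0 < S n" "S \<longlonglongrightarrow> 0"
  have fS: "filterlim S (at_right 0) sequentially"
    using S by (intro tendsto_imp_filterlim_at_right) auto
  show "(\<lambda>n. integral\<^sup>L M (s (S n))) \<longlonglongrightarrow> integral\<^sup>L M f"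
  proof (rule integral_dominated_convergence[where w=W])
    show "AE x in M. (\<lambda>i. s (S i) x) \<longlonglongrightarrow> f x"
      using lim by eventually_elim (rule filterlim_compose[OF _ fS])
    show "AE x in M. norm (s (S i) x) \<le> W x" for i using bound S by auto
    show "s (S i) \<in> borel_measurable M" for i using sm S by auto
  qed (use f W in auto)
qed simp

lemma int_inv_lin:
  fixes w \<epsilon> \<sigma> :: real
  assumes "w > 0" "\<epsilon> > 0" "\<sigma> = 1 \<or> \<sigma> = -1"
  defines "z \<equiv> complex_of_real w + complex_of_real \<sigma> * \<i> * complex_of_real \<epsilon>"
  shows "(LBINT x:{0<..<2*w}. 1 / (complex_of_real x - z)) = 2 * \<i> * of_real \<sigma> * of_real (arctan (w / \<epsilon>))"
proof -
  define F where "F = (\<lambda>x::real. complex_of_real (ln ((x - w)^2 + \<epsilon>^2) / 2) + \<i> * of_real \<sigma> * of_real (arctan ((x - w) / \<epsilon>)))"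
  have s2: "\<sigma>^2 = 1" using assms(3) by auto
  have nz: "complex_of_real x - z \<noteq> 0" for x
  proof
    assume "complex_of_real x - z = 0"
    then have "Im (complex_of_real x - z) = 0" by simp
    then show False using assms(2,3) by (auto simp: z_def)
  qed
  have pos: "(x - w)^2 + \<epsilon>^2 > 0" for x using assms(2) by (simp add: add_nonneg_pos)
  have der: "(F has_vector_derivative (1 / (complex_of_real x - z))) (at x within A)" for x A
  proof -
    have dA: "((\<lambda>x. ln ((x - w)^2 + \<epsilon>^2) / 2) has_real_derivative ((x - w) / ((x - w)^2 + \<epsilon>^2))) (at x within A)"
    proof -
      have p2: "\<epsilon>^2 + (x - w)^2 \<noteq> 0" using pos[of x] by linarith
      show ?thesis using pos[of x] p2 \<open>\<epsilon> > 0\<close> by (auto intro!: derivative_eq_intros simp: field_simps)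
    qed
    have dB: "((\<lambda>x. arctan ((x - w) / \<epsilon>)) has_real_derivative (\<epsilon> / ((x - w)^2 + \<epsilon>^2))) (at x within A)"
    proof -
      have e: "(1 / \<epsilon>) / (1 + ((x - w) / \<epsilon>)^2) = \<epsilon> / ((x - w)^2 + \<epsilon>^2)"
        using assms(2) by (simp add: field_simps power2_eq_square)
      have p3: "\<epsilon> * \<epsilon>^2 + \<epsilon> * (x - w)^2 > 0"
        using pos[of x] \<open>\<epsilon> > 0\<close> by (simp add: distrib_left[symmetric] add.commute)
      show ?thesis using \<open>\<epsilon> > 0\<close> p3
        by (auto intro!: derivative_eq_intros simp: e[symmetric] field_simps) (simp add: power2_eq_square power4_eq_xxxx)
    qed
    have "(F has_vector_derivative
        (complex_of_real ((x - w) / ((x - w)^2 + \<epsilon>^2)) + \<i> * of_real \<sigma> * of_real (\<epsilon> / ((x - w)^2 + \<epsilon>^2)))) (at x within A)"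
      unfolding F_def
      by (intro has_vector_derivative_add has_vector_derivative_of_real dA has_vector_derivative_mult_right dB)
    moreover have "complex_of_real ((x - w) / ((x - w)^2 + \<epsilon>^2)) + \<i> * of_real \<sigma> * of_real (\<epsilon> / ((x - w)^2 + \<epsilon>^2))
        = 1 / (complex_of_real x - z)"
    proof -
      have "(complex_of_real x - z) * (complex_of_real ((x - w) / ((x - w)^2 + \<epsilon>^2)) + \<i> * of_real \<sigma> * of_real (\<epsilon> / ((x - w)^2 + \<epsilon>^2))) = 1"
      proof -
        define D where "D = (x - w)^2 + \<epsilon>^2"
        have D: "D \<noteq> 0" using pos[of x] unfolding D_def by linarith
        have e1: "complex_of_real x - z = Complex (x - w) (- \<sigma> * \<epsilon>)"
          unfolding z_def by (simp add: complex_eq_iff)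
        have e2: "complex_of_real ((x - w) / D) + \<i> * of_real \<sigma> * of_real (\<epsilon> / D) = Complex ((x - w) / D) (\<sigma> * \<epsilon> / D)"
          by (simp add: complex_eq_iff)
        have "Complex (x - w) (- \<sigma> * \<epsilon>) * Complex ((x - w) / D) (\<sigma> * \<epsilon> / D) = Complex (((x-w)^2 + \<sigma>^2 * \<epsilon>^2) / D) 0"
          using D by (simp add: complex_eq_iff power2_eq_square field_simps)
        also have "\<dots> = 1" using s2 D by (simp add: D_def complex_eq_iff)
        finally show ?thesis using e1 e2 by (simp add: D_def)
      qed
      then show ?thesis using nz[of x] by (simp add: field_simps)
    qed
    ultimately show ?thesis by simp
  qed
  have "(LBINT x=ereal 0..ereal (2*w). 1 / (complex_of_real x - z)) = F (2*w) - F 0"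
    using assms(1)
    by (intro interval_integral_FTC_finite der continuous_intros) (use nz in \<open>auto simp: eq_commute[of z]\<close>)
  also have "\<dots> = 2 * \<i> * of_real \<sigma> * of_real (arctan (w / \<epsilon>))"
    by (simp add: F_def arctan_minus power2_eq_square field_simps)
  finally show ?thesis using assms(1) by (simp add: interval_integral_Ioo)
qed

lemma W_integrable: "integrable lborel (\<lambda>x::real. inverse (1 + x^2))"
  using integrable_inverse_1_plus_square
  by (simp add: set_integrable_def einterval_def)

lemma rat_decay:
  fixes p r :: "complex poly"
  assumes deg: "degree r \<ge> degree p + 2" and nz: "\<And>x::real. x \<ge> 0 \<Longrightarrow> poly r (of_real x) \<noteq> 0"
  shows "\<exists>C\<ge>0. \<forall>x::real. x \<ge> 0 \<longrightarrow> norm (poly p (of_real x) / poly r (of_real x)) \<le> C * inverse (1 + x^2)"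
proof -
  define s where "s = [:1, 0, 1:] * p"
  have "degree s \<le> degree [:1, 0, (1::complex):] + degree p" unfolding s_def by (rule degree_mult_le)
  also have "degree [:1, 0, (1::complex):] = 2" by simp
  finally have "degree s \<le> degree r" using deg by simp
  from poly_ratio_bounded[OF this nz] obtain B where
    B: "\<forall>x::real. x \<ge> 0 \<longrightarrow> norm (poly s (of_real x) / poly r (of_real x)) \<le> B" by blast
  have ps: "poly s (of_real x) = of_real (1 + x^2) * poly p (of_real x)" for x::real
    by (simp add: s_def power2_eq_square algebra_simps)
  have "norm (poly p (of_real x) / poly r (of_real x)) \<le> B * inverse (1 + x^2)" if "x \<ge> 0" for x::real
  proof -
    have pos: "1 + x^2 > 0" by (simp add: add_pos_nonneg)
    have "poly s (of_real x) / poly r (of_real x) = of_real (1 + x^2) * (poly p (of_real x) / poly r (of_real x))"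
      by (simp add: ps)
    then have "norm (poly s (of_real x) / poly r (of_real x)) = (1 + x^2) * norm (poly p (of_real x) / poly r (of_real x))"
      using pos by (simp only: norm_mult norm_of_real abs_of_pos)
    then have "(1 + x^2) * norm (poly p (of_real x) / poly r (of_real x)) \<le> B" using B that by metis
    then show ?thesis using pos by (simp add: field_simps)
  qed
  moreover have "B \<ge> 0" using B[rule_format, of 0] norm_ge_zero order_trans by blast
  ultimately show ?thesis by blast
qed

lemma poly_meas: "(\<lambda>x::real. poly p (complex_of_real x)) \<in> borel_measurable lborel"
  unfolding measurable_lborel2 by (intro borel_measurable_continuous_onI continuous_intros)

lemma plemelj:
  fixes p r :: "complex poly" and g :: "real \<Rightarrow> complex" and w \<sigma> :: real
  assumes deg: "degree r \<ge> degree p + 2"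
    and nz: "\<And>x::real. x \<ge> 0 \<Longrightarrow> poly r (of_real x) \<noteq> 0"
    and g: "\<And>x. x > 0 \<Longrightarrow> g x = poly p (of_real x) / poly r (of_real x)"
    and w: "w > 0" and sig: "\<sigma> = 1 \<or> \<sigma> = -1"
  shows "set_integrable lborel {0<..} g"
    and "\<And>\<epsilon>. \<epsilon> > 0 \<Longrightarrow> set_integrable lborel {0<..} (\<lambda>x. g x / (of_real x - (of_real w + of_real \<sigma> * \<i> * of_real \<epsilon>)))"
    and "((\<lambda>\<epsilon>. LINT x:{0<..}|lborel. g x / (of_real x - (of_real w + of_real \<sigma> * \<i> * of_real \<epsilon>)))
          \<longlongrightarrow> pv_integral g w + of_real \<sigma> * \<i> * of_real pi * g w) (at_right 0)"
proof -
  define R where "R = (\<lambda>x::real. poly p (of_real x) / poly r (of_real x))"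
  define W where "W = (\<lambda>x::real. inverse (1 + x^2))"
  define zz where "zz = (\<lambda>\<epsilon>::real. complex_of_real w + complex_of_real \<sigma> * \<i> * complex_of_real \<epsilon>)"
  obtain C where C0: "C \<ge> 0" and C: "\<And>x. x \<ge> 0 \<Longrightarrow> norm (R x) \<le> C * W x"
    using rat_decay[OF deg nz] unfolding R_def W_def by blast
  have Wint: "integrable lborel W" unfolding W_def by (rule W_integrable)
  have Wpos: "W x > 0" for x unfolding W_def by (simp add: add_pos_nonneg)
  have Wm: "W \<in> borel_measurable lborel" using Wint by auto
  have Rm: "R \<in> borel_measurable lborel" unfolding R_def by (intro borel_measurable_divide poly_meas)
  have gR: "indicator {0<..} x *\<^sub>R (g x) = indicator {0<..} x *\<^sub>R R x" for x
    by (cases "x > 0") (auto simp: indicator_def R_def g)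
  have Rint: "set_integrable lborel {0<..} R"
    unfolding set_integrable_def
  proof (rule Bochner_Integration.integrable_bound)
    show "integrable lborel (\<lambda>x. C * W x)" using Wint by simp
    show "(\<lambda>x. indicator {0<..} x *\<^sub>R R x) \<in> borel_measurable lborel"
      using Rm by (intro borel_measurable_scaleR borel_measurable_indicator) auto
    show "AE x in lborel. norm (indicator {0<..} x *\<^sub>R R x) \<le> norm (C * W x)"
      using C C0 Wpos by (auto simp: indicator_def less_imp_le intro!: always_eventually)
  qed
  define chi where "chi = (\<lambda>x::real. indicator {0<..<2*w} x :: real)"
  define h where "h = (\<lambda>x::real. (R x - R w * of_real (chi x)) / of_real (x - w))"
  have chiw: "chi w = 1" using w by (simp add: chi_def)
  have chi01: "chi x \<ge> 0" "chi x \<le> 1" for x by (auto simp: chi_def indicator_def)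
  have hid: "h x * of_real (x - w) = R x - R w * of_real (chi x)" for x
    by (cases "x = w") (auto simp: h_def chiw)
  have chim: "chi \<in> borel_measurable lborel" unfolding chi_def by auto
  have chiint: "integrable lborel chi" unfolding chi_def using w
    by (intro integrable_real_indicator) auto
  have hm: "h \<in> borel_measurable lborel" unfolding h_def
    using Rm chim by (intro borel_measurable_divide borel_measurable_diff borel_measurable_times
        borel_measurable_const borel_measurable_of_real) (auto simp: measurable_lborel2)
  define P0 where "P0 = smult (poly r (of_real w)) p - smult (poly p (of_real w)) r"
  have "poly P0 (of_real w) = 0" by (simp add: P0_def)
  then obtain q where q: "P0 = [:- of_real w, 1:] * q" using poly_eq_0_iff_dvd by (metis dvdE)
  have rw: "poly r (of_real w) \<noteq> 0" using nz w by simp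
  define Q where "Q = (\<lambda>x::real. poly q (of_real x) / (poly r (of_real x) * poly r (of_real w)))"
  have Rdiff: "R x - R w = of_real (x - w) * Q x" if "x \<ge> 0" for x
  proof -
    have "R x - R w = poly P0 (of_real x) / (poly r (of_real x) * poly r (of_real w))"
      using nz[OF that] rw by (simp add: R_def P0_def field_simps)
    also have "poly P0 (of_real x) = of_real (x - w) * poly q (of_real x)" by (simp add: q algebra_simps)
    finally show ?thesis by (simp add: Q_def)
  qed
  have "continuous_on {0..2*w} Q" unfolding Q_def using nz rw by (intro continuous_intros) auto
  then obtain Bq where Bq: "\<forall>x\<in>{0..2*w}. norm (Q x) \<le> Bq" using compact_bound_cont by blast
  define B where "B = max Bq 0"
  have B0: "B \<ge> 0" by (simp add: B_def)
  have hb: "norm (h x) \<le> B * chi x + C / w * W x" if "x > 0" for x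
  proof (cases "x < 2*w")
    case True
    then have chi1: "chi x = 1" using that by (simp add: chi_def)
    have "norm (h x) \<le> B"
    proof (cases "x = w")
      case True then show ?thesis using B0 by (simp add: h_def)
    next
      case False
      then have "h x = Q x" using Rdiff[of x] chi1 that by (simp add: h_def)
      moreover have "norm (Q x) \<le> Bq" using Bq True that by auto
      ultimately show ?thesis by (simp add: B_def)
    qed
    moreover have "C / w * W x \<ge> 0" using C0 w Wpos[of x] by simp
    ultimately show ?thesis using chi1 by simp
  next
    case False
    then have chi0: "chi x = 0" by (simp add: chi_def)
    have xw: "\<bar>x - w\<bar> \<ge> w" using False by simp
    have "norm (h x) = norm (R x) / \<bar>x - w\<bar>" by (simp add: h_def chi0 norm_divide flip: of_real_diff)
    also have "\<dots> \<le> C * W x / w"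
      using C[of x] that xw w C0 Wpos[of x] by (intro frac_le) auto
    finally show ?thesis using chi0 by simp
  qed
  define Hd where "Hd = (\<lambda>x. B * chi x + C / w * W x)"
  have Hdint: "integrable lborel Hd" unfolding Hd_def using chiint Wint by auto
  have Hd0: "Hd x \<ge> 0" for x unfolding Hd_def using B0 C0 w chi01[of x] Wpos[of x] by simp
  have hbi: "norm (indicator A x *\<^sub>R h x) \<le> Hd x" if "A \<subseteq> {0<..}" for A x
    using hb[of x] Hd0[of x] that by (auto simp: indicator_def Hd_def)
  have hint: "set_integrable lborel A h" if "A \<subseteq> {0<..}" "A \<in> sets lborel" for A
    unfolding set_integrable_def
  proof (rule Bochner_Integration.integrable_bound[OF Hdint])
    show "(\<lambda>x. indicator A x *\<^sub>R h x) \<in> borel_measurable lborel"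
      using hm that by (intro borel_measurable_scaleR borel_measurable_indicator) auto
    show "AE x in lborel. norm (indicator A x *\<^sub>R h x) \<le> norm (Hd x)"
      using hbi[OF that(1)] Hd0 by (auto intro!: always_eventually)
  qed
  show "set_integrable lborel {0<..} g"
    using Rint unfolding set_integrable_def gR .
  have nzz: "of_real x - zz e \<noteq> 0" if "e > 0" for x e
  proof
    assume "of_real x - zz e = 0"
    then have "Im (of_real x - zz e) = 0" by simp
    then show False using that sig by (auto simp: zz_def)
  qed
  have le1: "norm (of_real (x - w) / (of_real x - zz e)) \<le> 1" if "e > 0" for x e
  proof -
    have "\<bar>x - w\<bar> = \<bar>Re (of_real x - zz e)\<bar>" by (simp add: zz_def)
    also have "\<dots> \<le> norm (of_real x - zz e)" by (rule abs_Re_le_cmod)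
    finally show ?thesis using nzz[OF that, of x] by (simp add: norm_divide divide_le_eq_1 flip: of_real_diff)
  qed
  have le2: "norm (1 / (of_real x - zz e)) \<le> 1 / e" if "e > 0" for x e
  proof -
    have "e = \<bar>Im (of_real x - zz e)\<bar>" using sig that by (auto simp: zz_def)
    also have "\<dots> \<le> norm (of_real x - zz e)" by (rule abs_Im_le_cmod)
    finally show ?thesis using nzz[OF that, of x] that by (simp add: norm_divide frac_le)
  qed
  define s1 where "s1 = (\<lambda>e x. h x * (of_real (x - w) / (of_real x - zz e)))"
  define k where "k = (\<lambda>e x. of_real (chi x) / (of_real x - zz e))"
  have zzm: "(\<lambda>x. of_real x - zz e) \<in> borel_measurable lborel" for e
    by (intro borel_measurable_diff borel_measurable_of_real borel_measurable_const) (auto simp: measurable_lborel2)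
  have s1b: "norm (indicator {0<..} x *\<^sub>R s1 e x) \<le> Hd x" if "e > 0" for e x
  proof -
      have "norm (indicator {0<..} x *\<^sub>R s1 e x) \<le> norm (indicator {0<..} x *\<^sub>R h x)"
      proof -
        have "norm (s1 e x) \<le> norm (h x)" unfolding s1_def norm_mult
          by (rule mult_left_le[OF le1[OF that]]) simp
        then show ?thesis by (auto simp: indicator_def)
      qed
      also have "\<dots> \<le> Hd x" by (rule hbi) auto
      finally show ?thesis .
  qed
  have s1int: "set_integrable lborel {0<..} (s1 e)" if "e > 0" for e
    unfolding set_integrable_def
  proof (rule Bochner_Integration.integrable_bound[OF Hdint])
    show "(\<lambda>x. indicator {0<..} x *\<^sub>R s1 e x) \<in> borel_measurable lborel"
      unfolding s1_def using hm zzm[of e]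
      by (intro borel_measurable_scaleR borel_measurable_indicator borel_measurable_times borel_measurable_divide
          borel_measurable_of_real borel_measurable_diff borel_measurable_const) (auto simp: measurable_lborel2)
    show "AE x in lborel. norm (indicator {0<..} x *\<^sub>R s1 e x) \<le> norm (Hd x)"
      using s1b[OF that] Hd0 by (auto intro!: always_eventually)
  qed
  have kint: "set_integrable lborel {0<..} (k e)" if "e > 0" for e
    unfolding set_integrable_def
  proof (rule Bochner_Integration.integrable_bound)
    show "integrable lborel (\<lambda>x. chi x / e)" using chiint by simp
    show "(\<lambda>x. indicator {0<..} x *\<^sub>R k e x) \<in> borel_measurable lborel"
      unfolding k_def using chim zzm[of e]
      by (intro borel_measurable_scaleR borel_measurable_indicator borel_measurable_divide
          borel_measurable_of_real) (auto simp: measurable_lborel2)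
    show "AE x in lborel. norm (indicator {0<..} x *\<^sub>R k e x) \<le> norm (chi x / e)"
    proof (intro always_eventually allI)
      fix x
      have "norm (k e x) = chi x * norm (1 / (of_real x - zz e))"
        using chi01[of x] by (simp add: k_def norm_divide)
      also have "\<dots> \<le> chi x * (1 / e)" using le2[OF that, of x] chi01[of x] by (intro mult_left_mono) auto
      finally show "norm (indicator {0<..} x *\<^sub>R k e x) \<le> norm (chi x / e)"
        using chi01[of x] that by (auto simp: indicator_def)
    qed
  qed
  have splitR: "R x / (of_real x - zz e) = s1 e x + R w * k e x" if "e > 0" for x e
  proof -
    have "s1 e x + R w * k e x = (h x * of_real (x - w) + R w * of_real (chi x)) / (of_real x - zz e)"
      unfolding s1_def k_def by (simp only: add_divide_distrib times_divide_eq_right)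
    also have "h x * of_real (x - w) + R w * of_real (chi x) = R x" using hid[of x] by simp
    finally show ?thesis by simp
  qed
  have Rzint: "set_integrable lborel {0<..} (\<lambda>x. R x / (of_real x - zz e))" if "e > 0" for e
  proof -
    have "set_integrable lborel {0<..} (\<lambda>x. s1 e x + R w * k e x)"
      using s1int[OF that] kint[OF that] by (intro set_integral_add set_integrable_mult_right) auto
    then show ?thesis using splitR[OF that] by simp
  qed
  have gRz: "indicator {0<..} x *\<^sub>R (g x / y) = indicator {0<..} x *\<^sub>R (R x / y)" for x y
    by (cases "x > 0") (auto simp: indicator_def R_def g)
  show "\<And>\<epsilon>. \<epsilon> > 0 \<Longrightarrow> set_integrable lborel {0<..} (\<lambda>x. g x / (of_real x - (of_real w + of_real \<sigma> * \<i> * of_real \<epsilon>)))"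
    using Rzint unfolding set_integrable_def gRz zz_def .
  define P where "P = (LINT x:{0<..}|lborel. h x)"
  have ev0: "eventually (\<lambda>e::real. e > 0) (at_right 0)"
    by (simp add: eventually_at_right_field) (auto intro: exI[of _ 1])
  have Lsplit: "(LINT x:{0<..}|lborel. R x / (of_real x - zz e)) = (LINT x:{0<..}|lborel. s1 e x) + R w * (LINT x:{0<..}|lborel. k e x)" if "e > 0" for e
  proof -
    have "(LINT x:{0<..}|lborel. R x / (of_real x - zz e)) = (LINT x:{0<..}|lborel. s1 e x + R w * k e x)"
      using splitR[OF that] by simp
    also have "\<dots> = (LINT x:{0<..}|lborel. s1 e x) + (LINT x:{0<..}|lborel. R w * k e x)"
      using s1int[OF that] kint[OF that] by (intro set_integral_add(2)) auto
    finally show ?thesis by simp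
  qed
  have kval: "(LINT x:{0<..}|lborel. k e x) = 2 * \<i> * of_real \<sigma> * of_real (arctan (w / e))" if "e > 0" for e
  proof -
    have "(LINT x:{0<..}|lborel. k e x) = (LBINT x:{0<..<2*w}. 1 / (complex_of_real x - zz e))"
      unfolding set_lebesgue_integral_def
      by (intro Bochner_Integration.integral_cong refl) (auto simp: k_def chi_def indicator_def)
    also have "\<dots> = 2 * \<i> * of_real \<sigma> * of_real (arctan (w / e))"
      using int_inv_lin[OF w that sig] unfolding zz_def .
    finally show ?thesis .
  qed
  have lim1: "((\<lambda>e. LINT x:{0<..}|lborel. s1 e x) \<longlongrightarrow> P) (at_right 0)"
    unfolding P_def set_lebesgue_integral_def
  proof (rule dct_at_right[where W=Hd])
    show "(\<lambda>x. indicator {0<..} x *\<^sub>R h x) \<in> borel_measurable lborel"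
      using hm by (intro borel_measurable_scaleR borel_measurable_indicator) auto
    show "(\<lambda>x. indicator {0<..} x *\<^sub>R s1 t x) \<in> borel_measurable lborel" if "t > 0" for t
      using s1int[OF that] unfolding set_integrable_def by auto
    show "integrable lborel Hd" by fact
    show "AE x in lborel. ((\<lambda>t. indicator {0<..} x *\<^sub>R s1 t x) \<longlongrightarrow> indicator {0<..} x *\<^sub>R h x) (at_right 0)"
    proof (intro always_eventually allI)
      fix x
      show "((\<lambda>t. indicator {0<..} x *\<^sub>R s1 t x) \<longlongrightarrow> indicator {0<..} x *\<^sub>R h x) (at_right 0)"
      proof (cases "x = w")
        case True
        then show ?thesis by (simp add: s1_def h_def)
      next
        case False
        have "((\<lambda>t. of_real (x - w) / (of_real x - zz t)) \<longlongrightarrow> of_real (x - w) / (of_real x - zz 0)) (at_right 0)"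
          unfolding zz_def using False
          by (intro tendsto_intros tendsto_ident_at) auto
        moreover have "of_real (x - w) / (of_real x - zz 0) = 1" using False by (simp add: zz_def)
        ultimately have "((\<lambda>t. of_real (x - w) / (of_real x - zz t)) \<longlongrightarrow> 1) (at_right 0)" by simp
        then have "((\<lambda>t. indicator {0<..} x *\<^sub>R (h x * (of_real (x - w) / (of_real x - zz t)))) \<longlongrightarrow> indicator {0<..} x *\<^sub>R (h x * 1)) (at_right 0)"
          by (intro tendsto_intros)
        then show ?thesis by (simp add: s1_def)
      qed
    qed
    show "AE x in lborel. norm (indicator {0<..} x *\<^sub>R s1 t x) \<le> Hd x" if "t > 0" for t
      using s1b[OF that] by (auto intro!: always_eventually)
  qed
  have lim2: "((\<lambda>e. 2 * \<i> * of_real \<sigma> * of_real (arctan (w / e))) \<longlongrightarrow> 2 * \<i> * of_real \<sigma> * of_real (pi/2)) (at_right 0)"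
  proof -
    have "filterlim (\<lambda>e. w * inverse e) at_top (at_right (0::real))"
      by (rule filterlim_tendsto_pos_mult_at_top[OF tendsto_const w filterlim_inverse_at_top_right])
    then have "filterlim (\<lambda>e. w / e) at_top (at_right (0::real))" by (simp add: divide_inverse)
    then have "((\<lambda>e. arctan (w / e)) \<longlongrightarrow> pi/2) (at_right 0)"
      by (rule filterlim_compose[OF tendsto_arctan_at_top])
    then show ?thesis by (intro tendsto_intros)
  qed
  have S2: "((\<lambda>e. LINT x:{0<..}|lborel. R x / (of_real x - zz e)) \<longlongrightarrow> P + R w * (2 * \<i> * of_real \<sigma> * of_real (pi/2))) (at_right 0)"
  proof -
    have "((\<lambda>e. (LINT x:{0<..}|lborel. s1 e x) + R w * (2 * \<i> * of_real \<sigma> * of_real (arctan (w / e))))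
            \<longlongrightarrow> P + R w * (2 * \<i> * of_real \<sigma> * of_real (pi/2))) (at_right 0)"
      by (intro tendsto_add lim1 tendsto_mult tendsto_const lim2)
    moreover have "eventually (\<lambda>e. (LINT x:{0<..}|lborel. s1 e x) + R w * (2 * \<i> * of_real \<sigma> * of_real (arctan (w / e)))
          = (LINT x:{0<..}|lborel. R x / (of_real x - zz e))) (at_right 0)"
      using ev0 by eventually_elim (simp add: Lsplit kval)
    ultimately show ?thesis by (rule Lim_transform_eventually)
  qed
  define S where "S = (\<lambda>d. {0<..<w-d} \<union> {w+d<..})"
  define kk where "kk = (\<lambda>x. complex_of_real (chi x) / of_real (x - w))"
  have Ssub: "S d \<subseteq> {0<..}" if "d > 0" for d using w that by (auto simp: S_def)
  have Ssets: "S d \<in> sets lborel" for d by (simp add: S_def)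
  have kkm: "kk \<in> borel_measurable lborel" unfolding kk_def using chim
    by (intro borel_measurable_divide borel_measurable_of_real) (auto simp: measurable_lborel2)
  have kkint: "set_integrable lborel (S d) kk" if "d > 0" for d
    unfolding set_integrable_def
  proof (rule Bochner_Integration.integrable_bound)
    show "integrable lborel (\<lambda>x. chi x / d)" using chiint by simp
    show "(\<lambda>x. indicator (S d) x *\<^sub>R kk x) \<in> borel_measurable lborel"
      using kkm Ssets by (intro borel_measurable_scaleR borel_measurable_indicator) auto
    show "AE x in lborel. norm (indicator (S d) x *\<^sub>R kk x) \<le> norm (chi x / d)"
    proof (intro always_eventually allI)
      fix x
      show "norm (indicator (S d) x *\<^sub>R kk x) \<le> norm (chi x / d)"
      proof (cases "x \<in> S d")
        case True
        then have "\<bar>x - w\<bar> \<ge> d" by (auto simp: S_def)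
        then have "chi x / \<bar>x - w\<bar> \<le> chi x / d" using that chi01[of x] by (intro divide_left_mono) auto
        then show ?thesis using True chi01[of x] that by (simp add: kk_def norm_divide flip: of_real_diff)
      qed (use chi01[of x] that in simp)
    qed
  qed
  have kk0: "(LINT x:S d|lborel. kk x) = 0" if "d > 0" for d
  proof -
    define f where "f = (\<lambda>x. indicator (S d) x *\<^sub>R kk x)"
    have refl: "f (2*w + (-1) * x) = - f x" for x
    proof -
      have i: "indicator (S d) (2*w + (-1) * x) * chi (2*w + (-1) * x) = indicator (S d) x * chi x"
        using that by (auto simp: S_def chi_def indicator_def)
      have "f (2*w + (-1) * x) = complex_of_real (indicator (S d) (2*w + (-1) * x) * chi (2*w + (-1) * x)) / of_real (w - x)"
        by (simp add: f_def kk_def scaleR_conv_of_real)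
      also have "\<dots> = - f x"
      proof -
        have mw: "complex_of_real (w - x) = - complex_of_real (x - w)" by simp
        show ?thesis unfolding i mw divide_minus_right
          by (simp add: f_def kk_def scaleR_conv_of_real)
      qed
      finally show ?thesis .
    qed
    have "integral\<^sup>L lborel f = \<bar>-1\<bar> *\<^sub>R (LBINT x. f (2*w + (-1) * x))"
      by (rule lborel_integral_real_affine) simp
    also have "\<dots> = (LBINT x. - f x)" by (simp only: refl abs_minus_cancel abs_one scaleR_one)
    also have "\<dots> = - integral\<^sup>L lborel f" by (rule integral_minus)
    finally have "integral\<^sup>L lborel f = 0" by simp
    then show ?thesis unfolding set_lebesgue_integral_def f_def .
  qed
  have pvS: "integral (S d) (\<lambda>x. g x / of_real (x - w)) = (LINT x:S d|lborel. h x)" if "0 < d" for d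
  proof -
    have "integral (S d) (\<lambda>x. g x / of_real (x - w)) = integral (S d) (\<lambda>x. h x + R w * kk x)"
    proof (rule integral_cong)
      fix x assume "x \<in> S d"
      then have x: "x > 0" "x \<noteq> w" using that w by (auto simp: S_def)
      have "h x + R w * kk x = (R x - R w * of_real (chi x) + R w * of_real (chi x)) / of_real (x - w)"
        unfolding h_def kk_def by (simp only: add_divide_distrib times_divide_eq_right)
      then show "g x / of_real (x - w) = h x + R w * kk x" using x by (simp add: g R_def)
    qed
    also have "\<dots> = (LINT x:S d|lborel. h x + R w * kk x)"
      using hint[OF Ssub[OF that] Ssets] kkint[OF that]
      by (intro set_borel_integral_eq_integral(2)[symmetric] set_integral_add(1) set_integrable_mult_right) auto
    also have "\<dots> = (LINT x:S d|lborel. h x) + R w * (LINT x:S d|lborel. kk x)"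
      using hint[OF Ssub[OF that] Ssets] kkint[OF that]
      by (subst set_integral_add(2)) auto
    finally show ?thesis using kk0[OF that] by simp
  qed
  have lim3: "((\<lambda>d. LINT x:S d|lborel. h x) \<longlongrightarrow> P) (at_right 0)"
    unfolding P_def set_lebesgue_integral_def
  proof (rule dct_at_right[where W=Hd])
    show "(\<lambda>x. indicator {0<..} x *\<^sub>R h x) \<in> borel_measurable lborel"
      using hm by (intro borel_measurable_scaleR borel_measurable_indicator) auto
    show "(\<lambda>x. indicator (S t) x *\<^sub>R h x) \<in> borel_measurable lborel" if "t > 0" for t
      using hm Ssets by (intro borel_measurable_scaleR borel_measurable_indicator) auto
    show "integrable lborel Hd" by fact
    show "AE x in lborel. ((\<lambda>t. indicator (S t) x *\<^sub>R h x) \<longlongrightarrow> indicator {0<..} x *\<^sub>R h x) (at_right 0)"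
      using AE_lborel_singleton[of w]
    proof eventually_elim
      fix x :: real assume "x \<noteq> w"
      then have "\<bar>x - w\<bar> > 0" by simp
      have "eventually (\<lambda>t. indicator (S t) x *\<^sub>R h x = indicator {0<..} x *\<^sub>R h x) (at_right 0)"
        unfolding eventually_at_right_field
        by (rule exI[of _ "\<bar>x - w\<bar>"]) (use \<open>\<bar>x - w\<bar> > 0\<close> w in \<open>auto simp: S_def indicator_def\<close>)
      then show "((\<lambda>t. indicator (S t) x *\<^sub>R h x) \<longlongrightarrow> indicator {0<..} x *\<^sub>R h x) (at_right 0)"
        by (rule tendsto_eventually)
    qed
    show "AE x in lborel. norm (indicator (S t) x *\<^sub>R h x) \<le> Hd x" if "t > 0" for t
      using hbi[OF Ssub[OF that]] by (auto intro!: always_eventually)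
  qed
  have pv: "pv_integral g w = P"
  proof -
    have "((\<lambda>d. integral (S d) (\<lambda>x. g x / of_real (x - w))) \<longlongrightarrow> P) (at_right 0)"
      using lim3 by (rule Lim_transform_eventually) (use ev0 in \<open>eventually_elim, metis pvS\<close>)
    then show ?thesis unfolding pv_integral_def S_def by (intro tendsto_Lim) auto
  qed
  have eqf: "(\<lambda>e. LINT x:{0<..}|lborel. g x / (of_real x - (of_real w + of_real \<sigma> * \<i> * of_real e)))
      = (\<lambda>e. LINT x:{0<..}|lborel. R x / (of_real x - zz e))"
    unfolding set_lebesgue_integral_def gRz zz_def ..
  have "P + R w * (2 * \<i> * of_real \<sigma> * of_real (pi/2)) = pv_integral g w + of_real \<sigma> * \<i> * of_real pi * g w"
    using pv g[OF w] by (simp add: R_def)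
  then show "((\<lambda>\<epsilon>. LINT x:{0<..}|lborel. g x / (of_real x - (of_real w + of_real \<sigma> * \<i> * of_real \<epsilon>)))
          \<longlongrightarrow> pv_integral g w + of_real \<sigma> * \<i> * of_real pi * g w) (at_right 0)"
    using S2 unfolding eqf by simp
qed

lemma det_tendsto:
  fixes F :: "'b \<Rightarrow> complex^'n::finite^'n"
  assumes "(F \<longlongrightarrow> A) net"
  shows "((\<lambda>e. det (F e)) \<longlongrightarrow> det A) net"
  unfolding det_def by (intro tendsto_intros assms)

lemma repl_tendsto:
  fixes F :: "'b \<Rightarrow> complex^'n::finite^'n"
  assumes "(F \<longlongrightarrow> A) net"
  shows "((\<lambda>e. (\<chi> i j. if j = m then b $ i else F e $ i $ j)) \<longlongrightarrow> (\<chi> i j. if j = m then b $ i else A $ i $ j)) net"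
  by (intro vec_tendstoI) (auto intro!: tendsto_intros assms)

lemma matrix_inv_entry:
  fixes A :: "complex^'n::finite^'n"
  assumes "det A \<noteq> 0"
  shows "matrix_inv A $ m $ n = det (\<chi> i j. if j = m then axis n 1 $ i else A $ i $ j) / det A"
proof -
  have "invertible A" using assms invertible_det_nz by blast
  then have "\<exists>A'. A ** A' = mat 1 \<and> A' ** A = mat 1" unfolding invertible_def .
  then have "A ** matrix_inv A = mat 1 \<and> matrix_inv A ** A = mat 1" unfolding matrix_inv_def by (rule someI_ex)
  then have AA: "A ** matrix_inv A = mat 1" by simp
  have "A *v (matrix_inv A *v axis n 1) = axis n 1"
    by (simp add: matrix_vector_mul_assoc AA)
  then have "matrix_inv A *v axis n 1 = (\<chi> k. det (\<chi> i j. if j = k then axis n 1 $ i else A $ i $ j) / det A)"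
    using cramer[OF assms] by blast
  then have "(matrix_inv A *v axis n 1) $ m = det (\<chi> i j. if j = m then axis n 1 $ i else A $ i $ j) / det A"
    by simp
  moreover have "(matrix_inv A *v axis n 1) $ m = matrix_inv A $ m $ n"
    by (simp add: matrix_vector_mult_def axis_def if_distrib cong: if_cong)
  ultimately show ?thesis by simp
qed

lemma inj_det:
  fixes M :: "complex^'n::finite^'n"
  assumes "\<And>x. M *v x = 0 \<Longrightarrow> x = 0"
  shows "det M \<noteq> 0"
proof -
  have "inj ((*v) M)"
  proof (rule injI)
    fix x y assume "M *v x = M *v y"
    then have "M *v (x - y) = 0" by (simp add: matrix_vector_mult_diff_distrib)
    then have "x - y = 0" by (rule assms)
    then show "x = y" by simp
  qed
  then show ?thesis
    using det_nz_iff_inj_gen[OF matrix_vector_mul_linear_gen, of M] by (simp add: matrix_of_matrix_vector_mul)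
qed

lemma L2pos_mult:
  fixes U a :: "real \<Rightarrow> complex"
  assumes Uint: "set_integrable lborel {0<..} (\<lambda>x. (norm (U x))^2)"
    and Um: "set_borel_measurable lborel {0<..} U"
    and am: "a \<in> borel_measurable lborel"
    and ab: "\<And>x. norm (a x) \<le> Ab"
  shows "L2pos (\<lambda>x. a x * U x)"
proof -
  have m: "(\<lambda>x. indicator {0<..} x *\<^sub>R (a x * U x)) \<in> borel_measurable lborel"
  proof -
    have "(\<lambda>x. a x * (indicator {0<..} x *\<^sub>R U x)) \<in> borel_measurable lborel"
      using am Um unfolding set_borel_measurable_def by (intro borel_measurable_times) auto
    moreover have "(\<lambda>x. a x * (indicator {0<..} x *\<^sub>R U x)) = (\<lambda>x. indicator {0<..} x *\<^sub>R (a x * U x))"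
      by (auto simp: indicator_def)
    ultimately show ?thesis by simp
  qed
  have "set_integrable lborel {0<..} (\<lambda>x. (norm (a x * U x))^2)"
    unfolding set_integrable_def
  proof (rule Bochner_Integration.integrable_bound)
    show "integrable lborel (\<lambda>x. Ab^2 * (indicator {0<..} x *\<^sub>R (norm (U x))^2))"
      using Uint unfolding set_integrable_def by simp
    have "(\<lambda>x. (norm (indicator {0<..} x *\<^sub>R (a x * U x)))^2) \<in> borel_measurable lborel"
      using m by measurable
    moreover have "(\<lambda>x. (norm (indicator {0<..} x *\<^sub>R (a x * U x)))^2) = (\<lambda>x. indicator {0<..} x *\<^sub>R (norm (a x * U x))^2)"
      by (auto simp: indicator_def)
    ultimately show "(\<lambda>x. indicator {0<..} x *\<^sub>R (norm (a x * U x))^2) \<in> borel_measurable lborel" by simp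
    show "AE x in lborel. norm (indicator {0<..} x *\<^sub>R (norm (a x * U x))^2) \<le> norm (Ab^2 * (indicator {0<..} x *\<^sub>R (norm (U x))^2))"
    proof (intro always_eventually allI)
      fix x
      have "(norm (a x))^2 \<le> Ab^2" using ab[of x] by (intro power_mono) auto
      then have "(norm (a x))^2 * (norm (U x))^2 \<le> Ab^2 * (norm (U x))^2" by (intro mult_right_mono) auto
      then show "norm (indicator {0<..} x *\<^sub>R (norm (a x * U x))^2) \<le> norm (Ab^2 * (indicator {0<..} x *\<^sub>R (norm (U x))^2))"
        by (auto simp: indicator_def norm_mult power_mult_distrib)
    qed
  qed
  then show ?thesis unfolding L2pos_def set_borel_measurable_def using m by simp
qed


theorem lemma1:
  fixes om :: "'n::{finite,linorder} \<Rightarrow> real"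
    and lam :: real
    and v :: "'n \<Rightarrow> real \<Rightarrow> complex"
    and pp rr :: "'n \<Rightarrow> 'n \<Rightarrow> complex poly"
    and \<sigma> :: real
  assumes om_mono: "mono om"
    and v_L2: "\<And>n. L2pos (v n)"
    and ff: "\<And>m n w. w > 0 \<Longrightarrow>
               cnj (v m w) * v n w = poly (pp m n) (complex_of_real w) / poly (rr m n) (complex_of_real w)"
    and deg: "\<And>m n. degree (rr m n) \<ge> degree (pp m n) + 2"
    and nozero: "\<And>m n w. w \<ge> 0 \<Longrightarrow> poly (rr m n) (complex_of_real w) \<noteq> 0"
    and pzero: "\<And>m n. poly (pp m n) 0 = 0"
    and sigma: "\<sigma> = 1 \<or> \<sigma> = -1"
    and detK: "\<And>w. w > 0 \<Longrightarrow> det (K_mat \<sigma> om lam v w - mat (complex_of_real w)) \<noteq> 0"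
  shows "\<forall>w>0. ((\<lambda>\<epsilon>. red_resolvent om lam v (complex_of_real w + complex_of_real \<sigma> * \<i> * complex_of_real \<epsilon>))
            \<longlongrightarrow> matrix_inv (K_mat \<sigma> om lam v w - mat (complex_of_real w))) (at_right 0)"
proof (intro allI impI)
  fix w :: real assume w: "w > 0"
  define g where "g = (\<lambda>m k x. cnj (v m x) * v k x)"
  define z where "z = (\<lambda>e::real. complex_of_real w + complex_of_real \<sigma> * \<i> * complex_of_real e)"
  define G where "G = (\<lambda>e m k. LINT x:{0<..}|lborel. g m k x / (of_real x - z e))"
  define M where "M = (\<lambda>e. (\<chi> m k. (if m = k then of_real (om m) - z e else 0) - of_real (lam^2) * G e m k))"
  define A where "A = K_mat \<sigma> om lam v w - mat (complex_of_real w)"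
  have gff: "g m k x = poly (pp m k) (of_real x) / poly (rr m k) (of_real x)" if "x > 0" for m k x
    using ff[OF that] by (simp add: g_def)
  have gint: "set_integrable lborel {0<..} (g m k)" for m k
    using plemelj(1)[OF deg nozero gff w sigma] by simp
  have gzint: "set_integrable lborel {0<..} (\<lambda>x. g m k x / (of_real x - z e))" if "e > 0" for m k e
    using plemelj(2)[OF deg nozero gff w sigma that] by (simp add: z_def)
  have Glim: "((\<lambda>e. G e m k) \<longlongrightarrow> pv_integral (g m k) w + of_real \<sigma> * \<i> * of_real pi * g m k w) (at_right 0)" for m k
    using plemelj(3)[OF deg nozero gff w sigma] by (simp add: G_def z_def)
  have MA: "(M \<longlongrightarrow> A) (at_right 0)"
  proof (intro vec_tendstoI)
    fix m k
    have zl: "(z \<longlongrightarrow> of_real w) (at_right 0)" unfolding z_def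
      by (rule tendsto_eq_intros tendsto_ident_at refl | simp)+
    have "((\<lambda>e. M e $ m $ k) \<longlongrightarrow> (if m = k then of_real (om m) - of_real w else 0) - of_real (lam^2) * (pv_integral (g m k) w + of_real \<sigma> * \<i> * of_real pi * g m k w)) (at_right 0)"
      unfolding M_def by (cases "m = k") (auto intro!: tendsto_intros zl Glim)
    moreover have "(if m = k then of_real (om m) - of_real w else 0) - of_real (lam^2) * (pv_integral (g m k) w + of_real \<sigma> * \<i> * of_real pi * g m k w) = A $ m $ k"
      unfolding A_def K_mat_def K0_mat_def D_mat_def Gamma_mat_def g_def by (simp add: mat_def algebra_simps)
    ultimately show "((\<lambda>e. M e $ m $ k) \<longlongrightarrow> A $ m $ k) (at_right 0)" by simp
  qed
  have nzz: "of_real x - z e \<noteq> 0" if "e > 0" for x e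
  proof
    assume "of_real x - z e = 0"
    then have "Im (of_real x - z e) = 0" by simp
    then show False using that sigma by (auto simp: z_def)
  qed
  have vm: "set_borel_measurable lborel {0<..} (v k)" for k using v_L2[of k] unfolding L2pos_def by simp
  have ic: "L2inner (v m) f = - of_real lam * (\<Sum>k\<in>UNIV. c k * G e m k)"
    if e: "e > 0" and fm: "set_borel_measurable lborel {0<..} f"
       and fae: "AE x in lborel. x > 0 \<longrightarrow> f x = - of_real lam * (\<Sum>k\<in>UNIV. c k * v k x) / (of_real x - z e)" for e f c m
  proof -
    define F where "F = (\<lambda>k x. indicator {0<..} x *\<^sub>R (g m k x / (of_real x - z e)))"
    have Fint: "integrable lborel (F k)" for k using gzint[OF e] unfolding F_def set_integrable_def by blast
    have "L2inner (v m) f = integral\<^sup>L lborel (\<lambda>x. indicator {0<..} x *\<^sub>R (cnj (v m x) * f x))"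
      unfolding L2inner_def set_lebesgue_integral_def ..
    also have "\<dots> = integral\<^sup>L lborel (\<lambda>x. \<Sum>k\<in>UNIV. (- of_real lam * c k) * F k x)"
    proof (rule integral_cong_AE)
      have "(\<lambda>x. cnj (indicator {0<..} x *\<^sub>R v m x) * (indicator {0<..} x *\<^sub>R f x)) \<in> borel_measurable lborel"
        using vm[of m] fm unfolding set_borel_measurable_def
        by (intro borel_measurable_times borel_measurable_continuous_on[where f=cnj] continuous_intros) auto
      moreover have "(\<lambda>x. cnj (indicator {0<..} x *\<^sub>R v m x) * (indicator {0<..} x *\<^sub>R f x)) = (\<lambda>x. indicator {0<..} x *\<^sub>R (cnj (v m x) * f x))"
        by (auto simp: indicator_def)
      ultimately show "(\<lambda>x. indicator {0<..} x *\<^sub>R (cnj (v m x) * f x)) \<in> borel_measurable lborel" by simp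
      show "(\<lambda>x. \<Sum>k\<in>UNIV. (- of_real lam * c k) * F k x) \<in> borel_measurable lborel"
        using Fint by (intro borel_measurable_sum borel_measurable_times borel_measurable_const) auto
      show "AE x in lborel. indicator {0<..} x *\<^sub>R (cnj (v m x) * f x) = (\<Sum>k\<in>UNIV. (- of_real lam * c k) * F k x)"
        using fae
      proof eventually_elim
        case (elim x)
        show ?case
        proof (cases "x > 0")
          case True
          then have "cnj (v m x) * f x = cnj (v m x) * (- of_real lam * (\<Sum>k\<in>UNIV. c k * v k x) / (of_real x - z e))" using elim by simp
          also have "\<dots> = (\<Sum>k\<in>UNIV. (- of_real lam * c k) * (g m k x / (of_real x - z e)))"
            by (simp add: g_def sum_distrib_left sum_divide_distrib algebra_simps)
          finally show ?thesis using True by (simp add: F_def)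
        next
          case False then show ?thesis by (simp add: F_def)
        qed
      qed
    qed
    also have "\<dots> = (\<Sum>k\<in>UNIV. (- of_real lam * c k) * integral\<^sup>L lborel (F k))"
      using Fint by (subst Bochner_Integration.integral_sum) auto
    also have "\<dots> = - of_real lam * (\<Sum>k\<in>UNIV. c k * G e m k)"
      by (simp add: G_def F_def set_lebesgue_integral_def sum_distrib_left algebra_simps)
    finally show ?thesis .
  qed
  have Mv: "(M e *v x) $ m = (of_real (om m) - z e) * x $ m - of_real (lam^2) * (\<Sum>k\<in>UNIV. x $ k * G e m k)" for e x m
  proof -
    have "(M e *v x) $ m = (\<Sum>k\<in>UNIV. (if m = k then of_real (om m) - z e else 0) * x $ k - of_real (lam^2) * (x $ k * G e m k))"
      by (simp add: M_def matrix_vector_mult_def algebra_simps)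
    also have "\<dots> = (\<Sum>k\<in>UNIV. (if m = k then of_real (om m) - z e else 0) * x $ k) - (\<Sum>k\<in>UNIV. of_real (lam^2) * (x $ k * G e m k))"
      by (rule sum_subtractf)
    also have "(\<Sum>k\<in>UNIV. (if m = k then of_real (om m) - z e else 0) * x $ k) = (of_real (om m) - z e) * x $ m"
      by (simp add: if_distrib[of "\<lambda>a. a * _"] cong: if_cong)
    finally show ?thesis by (simp add: sum_distrib_left)
  qed
  have keyres: "M e *v (\<chi> i. c i) = axis n 1" if e: "e > 0" and rs: "res_sol om lam v (z e) n c f" for e n c f
  proof -
    from rs have fL: "L2pos f" and eq: "\<And>m. of_real (om m) * c m + of_real lam * L2inner (v m) f - z e * c m = (if m = n then 1 else 0)"
      and ae: "AE x in lborel. x > 0 \<longrightarrow> of_real x * f x + of_real lam * (\<Sum>k\<in>UNIV. c k * v k x) - z e * f x = 0"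
      unfolding res_sol_def by auto
    have fm: "set_borel_measurable lborel {0<..} f" using fL unfolding L2pos_def by simp
    have fae: "AE x in lborel. x > 0 \<longrightarrow> f x = - of_real lam * (\<Sum>k\<in>UNIV. c k * v k x) / (of_real x - z e)"
      using ae
    proof eventually_elim
      case (elim x)
      show ?case
      proof
        assume "x > 0"
        then have "(of_real x - z e) * f x = - of_real lam * (\<Sum>k\<in>UNIV. c k * v k x)"
          using elim by (simp add: algebra_simps add_eq_0_iff)
        then show "f x = - of_real lam * (\<Sum>k\<in>UNIV. c k * v k x) / (of_real x - z e)"
          using nzz[OF e, of x] by (simp add: field_simps)
      qed
    qed
    have "(M e *v (\<chi> i. c i)) $ m = axis n 1 $ m" for m
    proof -
      have "(M e *v (\<chi> i. c i)) $ m = of_real (om m) * c m + of_real lam * L2inner (v m) f - z e * c m"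
        unfolding Mv using ic[OF e fm fae, of m] by (simp add: power2_eq_square algebra_simps)
      also have "\<dots> = axis n 1 $ m" using eq[of m] by (simp add: axis_def)
      finally show ?thesis .
    qed
    then show ?thesis by (simp add: vec_eq_iff)
  qed
  have injM: "x = 0" if e: "e > 0" and Mx: "M e *v x = 0" for e x
  proof -
    define U where "U = (\<lambda>t. \<Sum>k\<in>UNIV. x $ k * v k t)"
    define F where "F = (\<lambda>m k t. indicator {0<..} t *\<^sub>R (g m k t / (of_real t - z e)))"
    have Fint: "integrable lborel (F m k)" for m k using gzint[OF e] unfolding F_def set_integrable_def by blast
    define T where "T = (\<Sum>m\<in>UNIV. \<Sum>k\<in>UNIV. cnj (x $ m) * x $ k * G e m k)"
    define H where "H = (\<lambda>t. indicator {0<..} t *\<^sub>R (of_real ((norm (U t))^2) / (of_real t - z e)))"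
    have Hsum: "H = (\<lambda>t. \<Sum>m\<in>UNIV. \<Sum>k\<in>UNIV. cnj (x $ m) * x $ k * F m k t)"
    proof
      fix t
      have "of_real ((norm (U t))^2) = cnj (U t) * U t" using complex_norm_square[of "U t"] by (simp add: mult.commute)
      also have "\<dots> = (\<Sum>m\<in>UNIV. \<Sum>k\<in>UNIV. cnj (x $ m) * x $ k * g m k t)"
        by (simp add: U_def cnj_sum sum_product g_def algebra_simps, subst sum.swap, simp)
      finally show "H t = (\<Sum>m\<in>UNIV. \<Sum>k\<in>UNIV. cnj (x $ m) * x $ k * F m k t)"
        by (simp add: H_def F_def sum_divide_distrib sum_distrib_left indicator_def)
    qed
    have Hint: "integrable lborel H" unfolding Hsum using Fint by auto
    have T_int: "T = integral\<^sup>L lborel H"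
    proof -
      have "T = (\<Sum>m\<in>UNIV. \<Sum>k\<in>UNIV. integral\<^sup>L lborel (\<lambda>t. cnj (x $ m) * x $ k * F m k t))"
      proof -
        have GF: "G e m k = integral\<^sup>L lborel (F m k)" for m k by (simp add: G_def F_def set_lebesgue_integral_def)
        show ?thesis by (simp add: T_def GF)
      qed
      also have "\<dots> = integral\<^sup>L lborel (\<lambda>t. \<Sum>m\<in>UNIV. \<Sum>k\<in>UNIV. cnj (x $ m) * x $ k * F m k t)"
        using Fint by (simp add: Bochner_Integration.integral_sum)
      finally show ?thesis unfolding Hsum .
    qed
    define I where "I = integral\<^sup>L lborel (\<lambda>t. indicator {0<..} t * ((norm (U t))^2 * e / ((t - w)^2 + e^2)))"
    have I0: "I \<ge> 0" unfolding I_def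
      by (rule Bochner_Integration.integral_nonneg) (use e in \<open>auto simp: indicator_def\<close>)
    have ImH: "Im (H t) = \<sigma> * (indicator {0<..} t * ((norm (U t))^2 * e / ((t - w)^2 + e^2)))" for t
    proof -
      have s2: "\<sigma>^2 = 1" using sigma by auto
      show ?thesis by (simp add: H_def Im_divide z_def indicator_def power_mult_distrib s2)
    qed
    have ImT: "Im T = \<sigma> * I"
    proof -
      have "Im T = integral\<^sup>L lborel (\<lambda>t. Im (H t))" using Hint by (simp add: T_int)
      also have "\<dots> = \<sigma> * I" unfolding ImH I_def by (rule integral_mult_right_zero)
      finally show ?thesis .
    qed
    have S0: "(\<Sum>m\<in>UNIV. cnj (x $ m) * (M e *v x) $ m) = (\<Sum>m\<in>UNIV. (of_real (om m) - z e) * of_real ((norm (x $ m))^2)) - of_real (lam^2) * T"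
    proof -
      have nx: "complex_of_real ((norm (x $ m))^2) = x $ m * cnj (x $ m)" for m
        using complex_norm_square[of "x $ m"] by simp
      have per: "cnj (x $ m) * (M e *v x) $ m = (of_real (om m) - z e) * of_real ((norm (x $ m))^2)
          - of_real (lam^2) * (\<Sum>k\<in>UNIV. cnj (x $ m) * x $ k * G e m k)" for m
        unfolding Mv nx by (simp add: sum_distrib_left algebra_simps)
      show ?thesis unfolding per T_def by (simp add: sum_subtractf sum_distrib_left)
    qed
    have "0 = Im (\<Sum>m\<in>UNIV. cnj (x $ m) * (M e *v x) $ m)" using Mx by simp
    also have "\<dots> = (\<Sum>m\<in>UNIV. - \<sigma> * e * (norm (x $ m))^2) - lam^2 * (\<sigma> * I)"
      unfolding S0 by (simp add: Im_sum ImT z_def)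
    also have "(\<Sum>m\<in>UNIV. - \<sigma> * e * (norm (x $ m))^2) = - \<sigma> * e * (\<Sum>m\<in>UNIV. (norm (x $ m))^2)"
      by (simp add: sum_distrib_left)
    finally have "\<sigma> * (e * (\<Sum>m\<in>UNIV. (norm (x $ m))^2) + lam^2 * I) = 0"
      by (simp add: algebra_simps)
    then have "e * (\<Sum>m\<in>UNIV. (norm (x $ m))^2) + lam^2 * I = 0" using sigma by auto
    moreover have "lam^2 * I \<ge> 0" using I0 by simp
    moreover have "(\<Sum>m\<in>UNIV. (norm (x $ m))^2) \<ge> 0" by (simp add: sum_nonneg)
    ultimately have "e * (\<Sum>m\<in>UNIV. (norm (x $ m))^2) = 0"
      using mult_nonneg_nonneg[of e "\<Sum>m\<in>UNIV. (norm (x $ m))^2"] e by linarith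
    then have "(\<Sum>m\<in>UNIV. (norm (x $ m))^2) = 0" using e by simp
    then have "\<forall>m\<in>UNIV. (norm (x $ m))^2 = 0" by (subst (asm) sum_nonneg_eq_0_iff) auto
    then show ?thesis by (simp add: vec_eq_iff)
  qed
  have normz: "e \<le> norm (of_real t - z e)" if "e > 0" for t e
  proof -
    have "e = \<bar>Im (of_real t - z e)\<bar>" using sigma that by (auto simp: z_def)
    also have "\<dots> \<le> norm (of_real t - z e)" by (rule abs_Im_le_cmod)
    finally show ?thesis .
  qed
  have zm: "(\<lambda>t. of_real t - z e) \<in> borel_measurable lborel" for e
    by (intro borel_measurable_diff borel_measurable_of_real borel_measurable_const) (auto simp: measurable_lborel2)
  have exs: "\<exists>c f. res_sol om lam v (z e) n c f" if e: "e > 0" for e n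
  proof -
    define X0 where "X0 = (\<chi> k. det (\<chi> i j. if j = k then axis n 1 $ i else M e $ i $ j) / det (M e))"
    have detMe: "det (M e) \<noteq> 0" using injM[OF e] by (intro inj_det) blast
    have MX0: "M e *v X0 = axis n 1" using cramer[OF detMe] unfolding X0_def by blast
    define c where "c = (\<lambda>i. X0 $ i)"
    define U where "U = (\<lambda>t. \<Sum>k\<in>UNIV. c k * v k t)"
    define f where "f = (\<lambda>t. - of_real lam * U t / (of_real t - z e))"
    have Um: "set_borel_measurable lborel {0<..} U"
    proof -
      have "(\<lambda>t. \<Sum>k\<in>UNIV. c k * (indicator {0<..} t *\<^sub>R v k t)) \<in> borel_measurable lborel"
        using vm unfolding set_borel_measurable_def
        by (intro borel_measurable_sum borel_measurable_times borel_measurable_const) auto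
      moreover have "(\<lambda>t. \<Sum>k\<in>UNIV. c k * (indicator {0<..} t *\<^sub>R v k t)) = (\<lambda>t. indicator {0<..} t *\<^sub>R U t)"
        by (auto simp: U_def indicator_def)
      ultimately show ?thesis unfolding set_borel_measurable_def by simp
    qed
    have Uint: "set_integrable lborel {0<..} (\<lambda>t. (norm (U t))^2)"
    proof -
      have "(\<lambda>t. indicator {0<..} t *\<^sub>R (norm (U t))^2) = (\<lambda>t. Re (\<Sum>m\<in>UNIV. \<Sum>k\<in>UNIV. cnj (c m) * c k * (indicator {0<..} t *\<^sub>R g m k t)))"
      proof
        fix t
        have "of_real ((norm (U t))^2) = cnj (U t) * U t" using complex_norm_square[of "U t"] by (simp add: mult.commute)
        also have "\<dots> = (\<Sum>m\<in>UNIV. \<Sum>k\<in>UNIV. cnj (c m) * c k * g m k t)"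
          by (simp add: U_def cnj_sum sum_product g_def algebra_simps, subst sum.swap, simp)
        finally have "(norm (U t))^2 = Re (\<Sum>m\<in>UNIV. \<Sum>k\<in>UNIV. cnj (c m) * c k * g m k t)"
          by (metis Re_complex_of_real)
        then show "indicator {0<..} t *\<^sub>R (norm (U t))^2 = Re (\<Sum>m\<in>UNIV. \<Sum>k\<in>UNIV. cnj (c m) * c k * (indicator {0<..} t *\<^sub>R g m k t))"
          by (auto simp: indicator_def)
      qed
      moreover have "integrable lborel (\<lambda>t. Re (\<Sum>m\<in>UNIV. \<Sum>k\<in>UNIV. cnj (c m) * c k * (indicator {0<..} t *\<^sub>R g m k t)))"
        by (intro integrable_bounded_linear[OF bounded_linear_Re] Bochner_Integration.integrable_sum integrable_mult_right gint[unfolded set_integrable_def])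
      ultimately show ?thesis unfolding set_integrable_def by simp
    qed
    have am1: "(\<lambda>t. - of_real lam / (of_real t - z e)) \<in> borel_measurable lborel"
      using zm[of e] by (intro borel_measurable_divide borel_measurable_const) auto
    have ab1: "norm (- of_real lam / (of_real t - z e)) \<le> \<bar>lam\<bar> / e" for t
      using normz[OF e, of t] e by (simp add: norm_divide frac_le)
    have fL: "L2pos f"
    proof -
      have "L2pos (\<lambda>t. (- of_real lam / (of_real t - z e)) * U t)"
        by (rule L2pos_mult[OF Uint Um am1 ab1])
      then show ?thesis by (simp add: f_def)
    qed
    have am2: "(\<lambda>t. of_real t * (- of_real lam / (of_real t - z e))) \<in> borel_measurable lborel"
      using am1 by (intro borel_measurable_times borel_measurable_of_real) (auto simp: measurable_lborel2)
    have ab2: "norm (of_real t * (- of_real lam / (of_real t - z e))) \<le> \<bar>lam\<bar> * (1 + norm (z e) / e)" for t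
    proof -
      have d: "norm (of_real t - z e) \<ge> e" using normz[OF e] .
      then have dpos: "norm (of_real t - z e) > 0" using e by linarith
      have "norm (complex_of_real t) \<le> norm (of_real t - z e) + norm (z e)"
        by (metis diff_add_cancel norm_triangle_ineq)
      then have "norm (complex_of_real t) / norm (of_real t - z e) \<le> 1 + norm (z e) / norm (of_real t - z e)"
        using dpos by (simp add: field_simps)
      also have "\<dots> \<le> 1 + norm (z e) / e" using d e by (simp add: frac_le)
      finally have r: "norm (complex_of_real t) / norm (of_real t - z e) \<le> 1 + norm (z e) / e" .
      have "norm (of_real t * (- of_real lam / (of_real t - z e))) = \<bar>lam\<bar> * (norm (complex_of_real t) / norm (of_real t - z e))"
        by (simp add: norm_mult norm_divide)
      also have "\<dots> \<le> \<bar>lam\<bar> * (1 + norm (z e) / e)" using r by (intro mult_left_mono) auto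
      finally show ?thesis .
    qed
    have xfL: "L2pos (\<lambda>t. complex_of_real t * f t)"
    proof -
      have "L2pos (\<lambda>t. (of_real t * (- of_real lam / (of_real t - z e))) * U t)"
        by (rule L2pos_mult[OF Uint Um am2 ab2])
      then show ?thesis by (simp add: f_def algebra_simps)
    qed
    have fm: "set_borel_measurable lborel {0<..} f" using fL unfolding L2pos_def by simp
    have fae: "AE x in lborel. x > 0 \<longrightarrow> f x = - of_real lam * (\<Sum>k\<in>UNIV. c k * v k x) / (of_real x - z e)"
      by (simp add: f_def U_def)
    have eqs: "\<forall>m. complex_of_real (om m) * c m + complex_of_real lam * L2inner (v m) f - z e * c m = (if m = n then 1 else 0)"
    proof
      fix m
      have "complex_of_real (om m) * c m + complex_of_real lam * L2inner (v m) f - z e * c m = (M e *v X0) $ m"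
        unfolding Mv ic[OF e fm fae, of m] by (simp add: c_def power2_eq_square algebra_simps)
      also have "\<dots> = (if m = n then 1 else 0)" by (simp add: MX0 axis_def)
      finally show "complex_of_real (om m) * c m + complex_of_real lam * L2inner (v m) f - z e * c m = (if m = n then 1 else 0)" .
    qed
    have aes: "AE t in lborel. t > 0 \<longrightarrow> complex_of_real t * f t + complex_of_real lam * (\<Sum>k\<in>UNIV. c k * v k t) - z e * f t = 0"
    proof (intro always_eventually allI impI)
      fix t :: real
      have "complex_of_real t * f t - z e * f t = (of_real t - z e) * f t" by (simp add: algebra_simps)
      also have "\<dots> = - of_real lam * U t" using nzz[OF e, of t] by (simp add: f_def)
      finally show "complex_of_real t * f t + complex_of_real lam * (\<Sum>k\<in>UNIV. c k * v k t) - z e * f t = 0"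
        by (simp add: U_def algebra_simps)
    qed
    show ?thesis unfolding res_sol_def using fL xfL eqs aes by blast
  qed
  define X where "X = (\<lambda>e n. (\<chi> k. det (\<chi> i j. if j = k then axis n 1 $ i else M e $ i $ j) / det (M e)))"
  have detM: "det (M e) \<noteq> 0" if "e > 0" for e
    using injM[OF that] by (intro inj_det) blast
  have MX: "M e *v X e n = axis n 1" if "e > 0" for e n
    using cramer[OF detM[OF that]] unfolding X_def by blast
  have rr: "red_resolvent om lam v (z e) = (\<chi> m n. X e n $ m)" if "e > 0" for e
  proof -
    have uniq: "c m = X e n $ m" if "res_sol om lam v (z e) n c f" for n c f m
    proof -
      have "M e *v ((\<chi> i. c i) - X e n) = 0"
        using keyres[OF \<open>e > 0\<close> that] MX[OF \<open>e > 0\<close>] by (simp add: matrix_vector_mult_diff_distrib)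
      then have "(\<chi> i. c i) - X e n = 0" by (rule injM[OF \<open>e > 0\<close>])
      then have "(\<chi> i. c i) = X e n" by simp
      then show ?thesis by (metis vec_lambda_beta)
    qed
    have "(THE x. \<exists>c f. res_sol om lam v (z e) n c f \<and> x = c m) = X e n $ m" for m n
    proof (rule the_equality)
      obtain c f where "res_sol om lam v (z e) n c f" using exs[OF \<open>e > 0\<close>] by blast
      then show "\<exists>c f. res_sol om lam v (z e) n c f \<and> X e n $ m = c m" using uniq by metis
    next
      fix x assume "\<exists>c f. res_sol om lam v (z e) n c f \<and> x = c m"
      then show "x = X e n $ m" using uniq by blast
    qed
    then show ?thesis unfolding red_resolvent_def by (simp add: vec_eq_iff)
  qed
  have detA: "det A \<noteq> 0" unfolding A_def by (rule detK[OF w])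
  have "((\<lambda>e. (\<chi> m n. X e n $ m)) \<longlongrightarrow> (\<chi> m n. det (\<chi> i j. if j = m then axis n 1 $ i else A $ i $ j) / det A)) (at_right 0)"
    unfolding X_def
    by (intro vec_tendstoI) (auto intro!: tendsto_divide det_tendsto repl_tendsto MA detA)
  also have "(\<chi> m n. det (\<chi> i j. if j = m then axis n 1 $ i else A $ i $ j) / det A) = matrix_inv A"
    using matrix_inv_entry[OF detA] by (simp add: vec_eq_iff)
  finally have lim: "((\<lambda>e. (\<chi> m n. X e n $ m)) \<longlongrightarrow> matrix_inv A) (at_right 0)" .
  have ev0: "eventually (\<lambda>e::real. e > 0) (at_right 0)"
    by (simp add: eventually_at_right_field) (auto intro: exI[of _ 1])
  show "((\<lambda>\<epsilon>. red_resolvent om lam v (complex_of_real w + complex_of_real \<sigma> * \<i> * complex_of_real \<epsilon>))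
            \<longlongrightarrow> matrix_inv (K_mat \<sigma> om lam v w - mat (complex_of_real w))) (at_right 0)"
    unfolding A_def[symmetric]
  proof (rule Lim_transform_eventually[OF lim])
    show "\<forall>\<^sub>F e in at_right 0. (\<chi> m n. X e n $ m) = red_resolvent om lam v (complex_of_real w + complex_of_real \<sigma> * \<i> * complex_of_real e)"
      using ev0
    proof eventually_elim
      case (elim e)
      show ?case using rr[OF elim] unfolding z_def by simp
    qed
  qed
qed

end
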